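(* Let $\mathcal{I}$ be an interval hypergraph on $[n]$ closed under intersection, let $A_1,\dots,A_q$ be acyclic orientations of $\mathcal{I}$, and let $I\in\mathcal{I}$. Then, with the join taken in $P_{\mathcal{I}}$, \[ \Big(\bigvee_{p\in[q]}A_p\Big)(I)=\min\Big(I\setminus\bigcup_{p\in[q]}\ \bigcup_{J\in\mathcal{I},\ A_p(J)\in I}[\min(J),A_p(J)[\Big). \]
   Context: An interval hypergraph $\mathcal{I}$ on $[n]$ is a collection of intervals of $[n]$ containing all singletons; it is closed under intersection if $I,J\in\mathcal{I}$, $I\cap J\ne\varnothing$ imply $I\cap J\in\mathcal{I}$ (in which case $P_{\mathcal{I}}$ is a lattice). An orientation is a map $O:\mathcal{I}\to[n]$ with $O(I)\in I$; it is acyclic if there are no $H_1,\dots,H_k$, $k\ge2$, with $O(H_{i+1})\in H_i\setminus\{O(H_i)\}$ for $i\in[k-1]$ and $O(H_1)\in H_k\setminus\{O(H_k)\}$. Orientations $O\ne O'$ are related by an increasing flip (from $O$ to $O'$) if there exist $1\le i<j\le n$ such that for all $H$: if $O(H)\ne O'(H)$ then $O(H)=i$, $O'(H)=j$; and if $\{i,j\}\subseteq H$ then $O(H)=i\iff O'(H)=j$. $P_{\mathcal{I}}$ is the transitive closure of the increasing flip relation on acyclic orientations. $[a,b[=\{a,\dots,b-1\}$. *)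

theory Defs
  imports Main
begin

definition interval_hypergraph :: "nat \<Rightarrow> nat set set \<Rightarrow> bool" where
  "interval_hypergraph n \<I> \<longleftrightarrow>
     (\<forall>H\<in>\<I>. \<exists>a b. 1 \<le> a \<and> a \<le> b \<and> b \<le> n \<and> H = {a..b}) \<and>
     (\<forall>i\<in>{1..n}. {i} \<in> \<I>)"

definition closed_under_intersection :: "nat set set \<Rightarrow> bool" where
  "closed_under_intersection \<I> \<longleftrightarrow>
     (\<forall>I\<in>\<I>. \<forall>J\<in>\<I>. I \<inter> J \<noteq> {} \<longrightarrow> I \<inter> J \<in> \<I>)"

(* an orientation is a map Or : I -> [n] with Or(H) in H; represented as a total
   function that is extensional (value 0, outside [n]) off the hypergraph *)
definition orientation :: "nat set set \<Rightarrow> (nat set \<Rightarrow> nat) \<Rightarrow> bool" where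
  "orientation \<I> Or \<longleftrightarrow> (\<forall>H\<in>\<I>. Or H \<in> H) \<and> (\<forall>H. H \<notin> \<I> \<longrightarrow> Or H = 0)"

definition acyclic_orientation :: "nat set set \<Rightarrow> (nat set \<Rightarrow> nat) \<Rightarrow> bool" where
  "acyclic_orientation \<I> Or \<longleftrightarrow> orientation \<I> Or \<and>
     \<not> (\<exists>Hs. length Hs \<ge> 2 \<and> set Hs \<subseteq> \<I> \<and>
          (\<forall>i. Suc i < length Hs \<longrightarrow> Or (Hs ! Suc i) \<in> Hs ! i - {Or (Hs ! i)}) \<and>
          Or (Hs ! 0) \<in> last Hs - {Or (last Hs)})"

definition increasing_flip :: "nat \<Rightarrow> nat set set \<Rightarrow> (nat set \<Rightarrow> nat) \<Rightarrow> (nat set \<Rightarrow> nat) \<Rightarrow> bool" where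
  "increasing_flip n \<I> Or Q \<longleftrightarrow> Or \<noteq> Q \<and>
     (\<exists>i j. 1 \<le> i \<and> i < j \<and> j \<le> n \<and>
        (\<forall>H\<in>\<I>. (Or H \<noteq> Q H \<longrightarrow> Or H = i \<and> Q H = j) \<and>
                 ({i, j} \<subseteq> H \<longrightarrow> (Or H = i \<longleftrightarrow> Q H = j))))"

definition acyc_orients :: "nat set set \<Rightarrow> (nat set \<Rightarrow> nat) set" where
  "acyc_orients \<I> = {Or. acyclic_orientation \<I> Or}"

definition flip_rel :: "nat \<Rightarrow> nat set set \<Rightarrow> ((nat set \<Rightarrow> nat) \<times> (nat set \<Rightarrow> nat)) set" where
  "flip_rel n \<I> = {(Or, Q). Or \<in> acyc_orients \<I> \<and> Q \<in> acyc_orients \<I> \<and> increasing_flip n \<I> Or Q}"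

definition P_le :: "nat \<Rightarrow> nat set set \<Rightarrow> (nat set \<Rightarrow> nat) \<Rightarrow> (nat set \<Rightarrow> nat) \<Rightarrow> bool" where
  "P_le n \<I> Or Q \<longleftrightarrow> Or \<in> acyc_orients \<I> \<and> Q \<in> acyc_orients \<I> \<and> (Or, Q) \<in> (flip_rel n \<I>)\<^sup>*"

definition is_join :: "nat \<Rightarrow> nat set set \<Rightarrow> (nat set \<Rightarrow> nat) set \<Rightarrow> (nat set \<Rightarrow> nat) \<Rightarrow> bool" where
  "is_join n \<I> S B \<longleftrightarrow> B \<in> acyc_orients \<I> \<and> (\<forall>A\<in>S. P_le n \<I> A B) \<and>
     (\<forall>C\<in>acyc_orients \<I>. (\<forall>A\<in>S. P_le n \<I> A C) \<longrightarrow> P_le n \<I> B C)"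

end

theory Submission
  imports Defs
begin

definition cnd :: "nat set set \<Rightarrow> (nat set \<Rightarrow> nat) \<Rightarrow> (nat set \<Rightarrow> nat) \<Rightarrow> bool" where
  "cnd \<I> X Y \<longleftrightarrow> (\<forall>I\<in>\<I>. \<forall>J\<in>\<I>. X J \<in> I \<longrightarrow> Y I \<in> J \<longrightarrow> X J \<le> Y I)"

definition arr :: "(nat set \<Rightarrow> nat) \<Rightarrow> nat set \<Rightarrow> nat set \<Rightarrow> bool" where
  "arr Or X Y \<longleftrightarrow> Or Y \<in> X \<and> Or Y \<noteq> Or X"

lemma cndD: "cnd \<I> X Y \<Longrightarrow> I\<in>\<I> \<Longrightarrow> J\<in>\<I> \<Longrightarrow> X J \<in> I \<Longrightarrow> Y I \<in> J \<Longrightarrow> X J \<le> Y I"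
  by (auto simp: cnd_def)

lemma ori_in: "orientation \<I> X \<Longrightarrow> H\<in>\<I> \<Longrightarrow> X H \<in> H"
  unfolding orientation_def by blast

lemma ori_out: "orientation \<I> X \<Longrightarrow> H\<notin>\<I> \<Longrightarrow> X H = 0"
  unfolding orientation_def by blast

lemma acyc_ori: "acyclic_orientation \<I> X \<Longrightarrow> orientation \<I> X"
  by (simp add: acyclic_orientation_def)

lemma per: fixes f :: "nat \<Rightarrow> 'a" assumes "\<forall>i. f (i + k) = f i" shows "f i = f (i mod k)"
proof -
  have "f (j + k * t) = f j" for j t
  proof (induction t)
    case 0 then show ?case by simp
  next
    case (Suc t)
    have "j + k * Suc t = (j + k * t) + k" by simp
    then show ?case using assms Suc by metis
  qed
  from this[of "i mod k" "i div k"] show ?thesis by (simp add: mod_mult_div_eq)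
qed

lemma cnd_refl: assumes "acyclic_orientation \<I> X" shows "cnd \<I> X X"
  unfolding cnd_def
proof (intro ballI impI, rule ccontr)
  fix I J assume IJ: "I\<in>\<I>" "J\<in>\<I>" "X J \<in> I" "X I \<in> J" "\<not> X J \<le> X I"
  let ?Hs = "[I,J]"
  have "length ?Hs \<ge> 2 \<and> set ?Hs \<subseteq> \<I> \<and>
     (\<forall>i. Suc i < length ?Hs \<longrightarrow> X (?Hs ! Suc i) \<in> ?Hs ! i - {X (?Hs ! i)}) \<and>
     X (?Hs ! 0) \<in> last ?Hs - {X (last ?Hs)}"
    using IJ by (auto simp: less_Suc_eq)
  then show False using assms unfolding acyclic_orientation_def by blast
qed

lemma cnd_le: "orientation \<I> X \<Longrightarrow> orientation \<I> Y \<Longrightarrow> cnd \<I> X Y \<Longrightarrow> H\<in>\<I> \<Longrightarrow> X H \<le> Y H"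
  using cndD[of \<I> X Y H H] ori_in by metis

lemma cnd_antisym:
  assumes "orientation \<I> X" "orientation \<I> Y" "cnd \<I> X Y" "cnd \<I> Y X" shows "X = Y"
proof
  fix H show "X H = Y H"
  proof (cases "H \<in> \<I>")
    case True then show ?thesis using cnd_le assms by (metis le_antisym)
  next
    case False then show ?thesis using ori_out assms by metis
  qed
qed

lemma flip_cnd:
  assumes aX: "acyclic_orientation \<I> X" and aY: "acyclic_orientation \<I> Y"
    and fl: "increasing_flip n \<I> X Y"
  shows "cnd \<I> X Y"
proof -
  obtain i j where ij: "i < j" "\<forall>H\<in>\<I>. (X H \<noteq> Y H \<longrightarrow> X H = i \<and> Y H = j)"
    using fl unfolding increasing_flip_def by blast
  show ?thesis unfolding cnd_def
  proof (intro ballI impI, rule ccontr)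
    fix I J assume I: "I\<in>\<I>" and J: "J\<in>\<I>" and a: "X J \<in> I" "Y I \<in> J" "\<not> X J \<le> Y I"
    show False
    proof (cases "Y I = X I")
      case True
      then show False using cndD[OF cnd_refl[OF aX] I J] a by simp
    next
      case False
      then have "X I = i" "Y I = j" using ij I by auto
      then have "Y J = X J" using ij J a by force
      then show False using cndD[OF cnd_refl[OF aY] I J] a by simp
    qed
  qed
qed

locale ctx =
  fixes n :: nat and \<I> :: "nat set set"
  assumes ih: "interval_hypergraph n \<I>" and ci: "closed_under_intersection \<I>"
begin

lemma intv: assumes "H \<in> \<I>" obtains a b where "1 \<le> a" "a \<le> b" "b \<le> n" "H = {a..b}"
  using ih assms unfolding interval_hypergraph_def by blast

lemma conv: assumes "H\<in>\<I>" "x\<in>H" "z\<in>H" "x \<le> y" "y \<le> z" shows "y\<in>H"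
  using assms(1) by (rule intv) (use assms in auto)

lemma finH: "H\<in>\<I> \<Longrightarrow> finite H" by (erule intv) auto
lemma subn: "H\<in>\<I> \<Longrightarrow> H \<subseteq> {1..n}" by (erule intv) auto
lemma neH: "H\<in>\<I> \<Longrightarrow> H \<noteq> {}" by (erule intv) auto
lemma finI: "finite \<I>"
proof -
  have "\<I> \<subseteq> Pow {1..n}" using subn by auto
  then show ?thesis by (rule finite_subset) auto
qed
lemma inter: "I\<in>\<I> \<Longrightarrow> J\<in>\<I> \<Longrightarrow> x\<in>I \<Longrightarrow> x\<in>J \<Longrightarrow> I \<inter> J \<in> \<I>"
  using ci unfolding closed_under_intersection_def by blast

lemma cnd_trans:
  assumes oX: "orientation \<I> X" and oY: "orientation \<I> Y" and oZ: "orientation \<I> Z"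
    and c1: "cnd \<I> X Y" and c2: "cnd \<I> Y Z"
  shows "cnd \<I> X Z"
  unfolding cnd_def
proof (intro ballI impI)
  fix I J assume I: "I\<in>\<I>" and J: "J\<in>\<I>" and a: "X J \<in> I" "Z I \<in> J"
  have XJ: "X J \<in> J" using ori_in[OF oX J] .
  have K: "I \<inter> J \<in> \<I>" using inter[OF I J a(1) XJ] .
  have YK: "Y (I \<inter> J) \<in> I \<inter> J" using ori_in[OF oY K] .
  have "X J \<le> Y (I \<inter> J)" using cndD[OF c1 K J] a XJ YK by auto
  also have "\<dots> \<le> Z I" using cndD[OF c2 I K] YK a ori_in[OF oZ I] by auto
  finally show "X J \<le> Z I" .
qed

lemma arr_SC:
  assumes o: "orientation \<I> Or" and c: "cnd \<I> Or Or" and P: "P\<in>\<I>" and H: "H\<in>\<I>"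
    and a1: "arr Or P H" and a2: "arr Or H S" and l1: "Or P < Or H" and l2: "Or S < Or H"
  shows "arr Or P S"
proof -
  have nP: "Or P \<notin> H"
  proof
    assume "Or P \<in> H"
    then have "Or H \<le> Or P" using cndD[OF c P H] a1 by (auto simp: arr_def)
    then show False using l1 by simp
  qed
  have "Or P < Or S"
  proof (rule ccontr)
    assume "\<not> ?thesis"
    then have "Or P \<in> H" using conv[OF H, of "Or S" "Or H" "Or P"] ori_in[OF o H] a2 l1
      by (auto simp: arr_def)
    then show False using nP by simp
  qed
  moreover have "Or S \<in> P" using conv[OF P, of "Or P" "Or H" "Or S"] ori_in[OF o P] a1 l2 calculation
    by (auto simp: arr_def)
  ultimately show ?thesis by (auto simp: arr_def)
qed

lemma no_cyc:
  assumes o: "orientation \<I> Or" and c: "cnd \<I> Or Or"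
  shows "0 < k \<Longrightarrow> (\<forall>i. f i \<in> \<I>) \<Longrightarrow> (\<forall>i. arr Or (f i) (f (Suc i))) \<Longrightarrow> (\<forall>i. f (i + k) = f i) \<Longrightarrow> False"
proof (induction k arbitrary: f)
  case 0 then show ?case by simp
next
  case (Suc k)
  show ?case
  proof (cases k)
    case 0
    then have "f (Suc 0) = f 0" using Suc.prems(4) by (metis add_0 add_Suc_shift)
    then show False using Suc.prems(3) by (metis arr_def)
  next
    case (Suc k')
    let ?K = "Suc k"
    let ?S = "(\<lambda>i. Or (f i)) ` {..<?K}"
    have "Max ?S \<in> ?S" by (rule Max_in) auto
    then obtain m where m: "m < ?K" "Or (f m) = Max ?S" by auto
    have mx: "Or (f i) \<le> Or (f m)" for i
    proof -
      have "f i = f (i mod ?K)" using per[OF Suc.prems(4)] .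
      moreover have "Or (f (i mod ?K)) \<le> Max ?S" by (rule Max_ge) auto
      ultimately show ?thesis using m by simp
    qed
    define g where "g i = f (Suc m + i mod k)" for i
    show False
    proof (rule Suc.IH[of g])
      show "0 < k" using Suc by simp
      show "\<forall>i. g i \<in> \<I>" using Suc.prems(2) by (simp add: g_def)
      show "\<forall>i. g (i + k) = g i" by (simp add: g_def)
      show "\<forall>i. arr Or (g i) (g (Suc i))"
      proof
        fix i
        show "arr Or (g i) (g (Suc i))"
        proof (cases "Suc (i mod k) < k")
          case True
          then have "Suc i mod k = Suc (i mod k)" by (simp add: mod_Suc)
          then show ?thesis using Suc.prems(3) by (simp add: g_def)
        next
          case False
          have "i mod k < k" using \<open>0 < k\<close> by simp
          then have e: "Suc (i mod k) = k" using False by simp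
          then have "Suc i mod k = 0" by (simp add: mod_Suc)
          then have g1: "g (Suc i) = f (Suc m)" by (simp add: g_def)
          have g0: "g i = f (Suc m + k')" using e Suc by (simp add: g_def)
          have "f (Suc (Suc m + k')) = f (m + ?K)" using Suc by simp
          also have "\<dots> = f m" using Suc.prems(4) by simp
          finally have fe: "f (Suc (Suc m + k')) = f m" .
          have a1: "arr Or (f (Suc m + k')) (f m)" using Suc.prems(3) fe by metis
          have a2: "arr Or (f m) (f (Suc m))" using Suc.prems(3) by simp
          have l1: "Or (f (Suc m + k')) < Or (f m)" using mx[of "Suc m + k'"] a1 by (auto simp: arr_def)
          have l2: "Or (f (Suc m)) < Or (f m)" using mx[of "Suc m"] a2 by (auto simp: arr_def)
          show ?thesis unfolding g0 g1
            by (rule arr_SC[OF o c _ _ a1 a2 l1 l2]) (use Suc.prems(2) in auto)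
        qed
      qed
    qed
  qed
qed

lemma acyc_of_cnd:
  assumes o: "orientation \<I> X" and c: "cnd \<I> X X"
  shows "acyclic_orientation \<I> X"
  unfolding acyclic_orientation_def
proof (intro conjI o notI)
  assume "\<exists>Hs. 2 \<le> length Hs \<and> set Hs \<subseteq> \<I> \<and>
     (\<forall>i. Suc i < length Hs \<longrightarrow> X (Hs ! Suc i) \<in> Hs ! i - {X (Hs ! i)}) \<and>
     X (Hs ! 0) \<in> last Hs - {X (last Hs)}"
  then obtain Hs where h: "2 \<le> length Hs" "set Hs \<subseteq> \<I>"
     "\<forall>i. Suc i < length Hs \<longrightarrow> X (Hs ! Suc i) \<in> Hs ! i - {X (Hs ! i)}"
     "X (Hs ! 0) \<in> last Hs - {X (last Hs)}" by blast
  define k where "k = length Hs"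
  define f where "f i = Hs ! (i mod k)" for i
  have k0: "0 < k" using h(1) by (auto simp: k_def)
  show False
  proof (rule no_cyc[OF o c k0, of f])
    have ne: "Hs \<noteq> []" using h(1) by auto
    show "\<forall>i. f i \<in> \<I>" using h(2) k0 ne by (auto simp: f_def k_def)
    show "\<forall>i. f (i + k) = f i" by (simp add: f_def)
    show "\<forall>i. arr X (f i) (f (Suc i))"
    proof
      fix i
      show "arr X (f i) (f (Suc i))"
      proof (cases "Suc (i mod k) < k")
        case True
        then have "Suc i mod k = Suc (i mod k)" by (simp add: mod_Suc)
        then show ?thesis using h(3) True by (auto simp: f_def arr_def k_def)
      next
        case False
        have "i mod k < k" using k0 by simp
        then have e: "Suc (i mod k) = k" using False by simp
        then have "Suc i mod k = 0" by (simp add: mod_Suc)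
        moreover have "Hs ! (i mod k) = last Hs" using e h(1)
          by (metis diff_Suc_1 k_def last_conv_nth list.size(3) not_numeral_le_zero)
        ultimately show ?thesis using h(4) by (auto simp: f_def arr_def)
      qed
    qed
  qed
qed

lemma acyc_iff: "acyclic_orientation \<I> X \<longleftrightarrow> orientation \<I> X \<and> cnd \<I> X X"
  using acyc_of_cnd cnd_refl acyc_ori by blast

lemma P_le_cnd: assumes "P_le n \<I> X Y" shows "cnd \<I> X Y"
proof -
  have aX: "acyclic_orientation \<I> X" and r: "(X, Y) \<in> (flip_rel n \<I>)\<^sup>*"
    using assms by (auto simp: P_le_def acyc_orients_def)
  from r show ?thesis
  proof (induction rule: rtrancl_induct)
    case base then show ?case using cnd_refl[OF aX] .
  next
    case (step Y Z)
    then have aY: "acyclic_orientation \<I> Y" and aZ: "acyclic_orientation \<I> Z"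
      and fl: "increasing_flip n \<I> Y Z"
      by (auto simp: flip_rel_def acyc_orients_def)
    show ?case by (rule cnd_trans[OF acyc_ori[OF aX] acyc_ori[OF aY] acyc_ori[OF aZ] step.IH flip_cnd[OF aY aZ fl]])
  qed
qed

end

context ctx begin

lemma cnd_path:
  assumes aC: "acyclic_orientation \<I> C"
  shows "acyclic_orientation \<I> X \<Longrightarrow> cnd \<I> X C \<Longrightarrow> (X, C) \<in> (flip_rel n \<I>)\<^sup>*"
proof (induction "\<Sum>H\<in>\<I>. C H - X H" arbitrary: X rule: less_induct)
  case less
  note aX = less.prems(1) and cXC = less.prems(2)
  have oX: "orientation \<I> X" using acyc_ori[OF aX] .
  have oC: "orientation \<I> C" using acyc_ori[OF aC] .
  have cX: "cnd \<I> X X" using cnd_refl[OF aX] .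
  have cC: "cnd \<I> C C" using cnd_refl[OF aC] .
  have le: "X H \<le> C H" if "H\<in>\<I>" for H using cnd_le[OF oX oC cXC that] .
  show ?case
  proof (cases "X = C")
    case True then show ?thesis by simp
  next
    case False
    define D where "D = {H\<in>\<I>. X H \<noteq> C H}"
    have Dne: "D \<noteq> {}"
    proof
      assume "D = {}"
      then have "X H = C H" for H
        by (cases "H \<in> \<I>") (auto simp: D_def ori_out[OF oX] ori_out[OF oC])
      then show False using False by auto
    qed
    have finD: "finite D" using finI by (simp add: D_def)
    define i where "i = Max (X ` D)"
    have "i \<in> X ` D" unfolding i_def using finD Dne by (intro Max_in) auto
    have imax: "X H \<le> i" if "H\<in>\<I>" "X H \<noteq> C H" for H
      unfolding i_def using finD that by (intro Max_ge) (auto simp: D_def)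
    define E where "E = {H\<in>D. X H = i}"
    have Ene: "E \<noteq> {}" using \<open>i \<in> X ` D\<close> by (auto simp: E_def)
    have finE: "finite E" using finD by (simp add: E_def)
    define j where "j = Max (C ` E)"
    have "j \<in> C ` E" unfolding j_def using finE Ene by (intro Max_in) auto
    then obtain H0 where H0: "H0 \<in> \<I>" "X H0 = i" "C H0 = j" "X H0 \<noteq> C H0"
      by (auto simp: E_def D_def)
    have jmax: "C H \<le> j" if "H\<in>\<I>" "X H = i" "C H \<noteq> i" for H
      unfolding j_def using finE that by (intro Max_ge) (auto simp: E_def D_def)
    have ij: "i < j" using le[OF H0(1)] H0 by simp
    have iH0: "i \<in> H0" using ori_in[OF oX H0(1)] H0 by simp
    have jH0: "j \<in> H0" using ori_in[OF oC H0(1)] H0 by simp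
    define ch where "ch H \<longleftrightarrow> H \<in> \<I> \<and> i \<in> H \<and> j \<in> H \<and> X H = i" for H
    define X' where "X' H = (if ch H then j else X H)" for H
    have chH0: "ch H0" using H0 iH0 jH0 by (simp add: ch_def)
    have oX': "orientation \<I> X'"
      unfolding orientation_def
    proof (intro conjI ballI allI impI)
      fix H assume "H \<in> \<I>" then show "X' H \<in> H"
        using ori_in[OF oX] by (auto simp: X'_def ch_def)
    next
      fix H assume "H \<notin> \<I>" then show "X' H = 0"
        using ori_out[OF oX] by (auto simp: X'_def ch_def)
    qed
    have cX'C: "cnd \<I> X' C"
      unfolding cnd_def
    proof (intro ballI impI)
      fix I J assume I: "I\<in>\<I>" and J: "J\<in>\<I>" and a1: "X' J \<in> I" and a2: "C I \<in> J"
      show "X' J \<le> C I"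
      proof (cases "ch J")
        case False
        then have "X' J = X J" by (simp add: X'_def)
        then show ?thesis using cndD[OF cXC I J] a1 a2 by simp
      next
        case True
        then have XJ: "X' J = j" "X J = i" "i \<in> J" "j \<in> J" by (auto simp: X'_def ch_def)
        show ?thesis
        proof (rule ccontr)
          assume "\<not> ?thesis"
          then have lt: "C I < j" using XJ by simp
          have jI: "j \<in> I" using a1 XJ by simp
          have "i \<le> C I"
          proof (rule ccontr)
            assume nle: "\<not> i \<le> C I"
            then have "i \<in> I" using conv[OF I, of "C I" j i] ori_in[OF oC I] jI ij by auto
            then have "X J \<le> C I" using cndD[OF cXC I J] XJ a2 by simp
            then show False using nle XJ by simp
          qed
          then have "C I \<in> H0" using conv[OF H0(1) iH0 jH0] lt by auto
          then have "C H0 \<le> C I" using cndD[OF cC I H0(1)] H0 jI by simp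
          then show False using lt H0 by simp
        qed
      qed
    qed
    have cX'X': "cnd \<I> X' X'"
      unfolding cnd_def
    proof (intro ballI impI)
      fix I J assume I: "I\<in>\<I>" and J: "J\<in>\<I>" and a1: "X' J \<in> I" and a2: "X' I \<in> J"
      show "X' J \<le> X' I"
      proof (cases "ch J")
        case True
        then have XJ: "X' J = j" "X J = i" "i \<in> J" "j \<in> J" by (auto simp: X'_def ch_def)
        show ?thesis
        proof (cases "ch I")
          case True then show ?thesis using XJ by (simp add: X'_def)
        next
          case False
          then have XI: "X' I = X I" by (simp add: X'_def)
          show ?thesis
          proof (rule ccontr)
            assume "\<not> ?thesis"
            then have lt: "X I < j" using XJ XI by simp
            have jI: "j \<in> I" using a1 XJ by simp
            have niI: "i \<notin> I"
            proof
              assume iI: "i \<in> I"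
              then have "X I \<noteq> i" using False I jI by (auto simp: ch_def)
              moreover have "i \<le> X I" using cndD[OF cX I J] XJ iI a2 XI by simp
              moreover have "X I \<le> i" using cndD[OF cX J I] XJ iI a2 XI by simp
              ultimately show False by simp
            qed
            have "i < X I"
            proof (rule ccontr)
              assume "\<not> i < X I"
              then have "i \<in> I" using conv[OF I, of "X I" j i] ori_in[OF oX I] jI ij by auto
              then show False using niI by simp
            qed
            then have "X I = C I" using imax[OF I] by force
            then have "j \<le> C I" using cndD[OF cX'C I J] XJ a1 a2 XI by simp
            then show False using lt \<open>X I = C I\<close> by simp
          qed
        qed
      next
        case False
        then have XJ: "X' J = X J" by (simp add: X'_def)
        show ?thesis
        proof (cases "ch I")
          case False
          then have "X' I = X I" by (simp add: X'_def)
          then show ?thesis using cndD[OF cX I J] a1 a2 XJ by simp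
        next
          case True
          then have XI: "X' I = j" "X I = i" "i \<in> I" "j \<in> I" by (auto simp: X'_def ch_def)
          show ?thesis
          proof (rule ccontr)
            assume "\<not> ?thesis"
            then have lt: "j < X J" using XJ XI by simp
            have "X J = C J" using imax[OF J] lt ij by force
            have CI1: "i \<le> C I" using le[OF I] XI by simp
            have CI2: "C I \<le> j"
              using jmax[OF I XI(2)] ij by (cases "C I = i") auto
            have "C I \<in> H0" using conv[OF H0(1) iH0 jH0 CI1 CI2] .
            then have "C H0 \<le> C I" using cndD[OF cC I H0(1)] H0 XI by simp
            then have "C I = j" using CI2 H0 by simp
            then have "C I \<in> J" using a2 XI by simp
            then have "X J \<le> C I" using cndD[OF cXC I J] a1 XJ by simp
            then show False using lt \<open>C I = j\<close> by simp
          qed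
        qed
      qed
    qed
    have aX': "acyclic_orientation \<I> X'" using acyc_of_cnd[OF oX' cX'X'] .
    have fl: "increasing_flip n \<I> X X'"
      unfolding increasing_flip_def
    proof (intro conjI)
      show "X \<noteq> X'"
      proof
        assume "X = X'"
        then have "X H0 = X' H0" by simp
        then show False using chH0 H0 ij by (simp add: X'_def)
      qed
      have "1 \<le> i" using subn[OF H0(1)] iH0 by auto
      moreover have "j \<le> n" using subn[OF H0(1)] jH0 by auto
      moreover have "\<forall>H\<in>\<I>. (X H \<noteq> X' H \<longrightarrow> X H = i \<and> X' H = j) \<and>
                 ({i, j} \<subseteq> H \<longrightarrow> (X H = i \<longleftrightarrow> X' H = j))"
      proof
        fix H assume H: "H \<in> \<I>"
        have 1: "X H \<noteq> X' H \<longrightarrow> X H = i \<and> X' H = j"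
          by (auto simp: X'_def ch_def)
        have 2: "X H = i \<longleftrightarrow> X' H = j" if ijH: "i \<in> H" "j \<in> H"
        proof
          assume "X H = i" then show "X' H = j" using H ijH by (simp add: X'_def ch_def)
        next
          assume X'H: "X' H = j"
          show "X H = i"
          proof (rule ccontr)
            assume nXH: "X H \<noteq> i"
            then have "X H = j" using X'H by (simp add: X'_def ch_def split: if_splits)
            then have "X H \<le> X H0" using cndD[OF cX H0(1) H] jH0 ijH H0 by simp
            then show False using \<open>X H = j\<close> H0 ij by simp
          qed
        qed
        show "(X H \<noteq> X' H \<longrightarrow> X H = i \<and> X' H = j) \<and> ({i, j} \<subseteq> H \<longrightarrow> (X H = i \<longleftrightarrow> X' H = j))"
          using 1 2 by auto
      qed
      ultimately show "\<exists>i j. 1 \<le> i \<and> i < j \<and> j \<le> n \<and>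
        (\<forall>H\<in>\<I>. (X H \<noteq> X' H \<longrightarrow> X H = i \<and> X' H = j) \<and>
                 ({i, j} \<subseteq> H \<longrightarrow> (X H = i \<longleftrightarrow> X' H = j)))"
        using ij by blast
    qed
    have meas: "(\<Sum>H\<in>\<I>. C H - X' H) < (\<Sum>H\<in>\<I>. C H - X H)"
    proof (rule sum_strict_mono_ex1[OF finI])
      show "\<forall>H\<in>\<I>. C H - X' H \<le> C H - X H"
        using ij by (auto simp: X'_def ch_def)
      show "\<exists>H\<in>\<I>. C H - X' H < C H - X H"
        using H0 chH0 ij by (intro bexI[of _ H0]) (auto simp: X'_def)
    qed
    have "(X', C) \<in> (flip_rel n \<I>)\<^sup>*" using less.hyps[OF meas aX' cX'C] .
    moreover have "(X, X') \<in> flip_rel n \<I>"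
      using aX aX' fl by (simp add: flip_rel_def acyc_orients_def)
    ultimately show ?thesis by (rule converse_rtrancl_into_rtrancl[rotated])
  qed
qed

lemma P_le_iff: "P_le n \<I> X Y \<longleftrightarrow> acyclic_orientation \<I> X \<and> acyclic_orientation \<I> Y \<and> cnd \<I> X Y"
  using P_le_cnd cnd_path by (auto simp: P_le_def acyc_orients_def)

end

context ctx begin

lemma join_main:
  fixes q :: nat and A :: "nat \<Rightarrow> nat set \<Rightarrow> nat"
  assumes aA: "\<forall>p\<in>{1..q}. acyclic_orientation \<I> (A p)"
  defines "U \<equiv> \<lambda>H. (\<Union>p\<in>{1..q}. \<Union>J\<in>{J\<in>\<I>. A p J \<in> H}. {Min J..<A p J})"
  defines "B0 \<equiv> \<lambda>H. if H \<in> \<I> then Min (H - U H) else 0"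
  shows "is_join n \<I> (A ` {1..q}) B0 \<and> (\<forall>B. is_join n \<I> (A ` {1..q}) B \<longrightarrow> B = B0)"
proof -
  have oA: "orientation \<I> (A p)" if "p\<in>{1..q}" for p using acyc_ori aA that by blast
  have memU: "x \<in> U H \<longleftrightarrow> (\<exists>p\<in>{1..q}. \<exists>J\<in>\<I>. A p J \<in> H \<and> Min J \<le> x \<and> x < A p J)" for x H
    by (auto simp: U_def)
  have MinJ: "Min J \<le> x" if "J\<in>\<I>" "x\<in>J" for J x using finH[OF that(1)] that(2) by simp
  have MinJin: "Min J \<in> J" if "J\<in>\<I>" for J using finH[OF that] neH[OF that] by simp
  have Bin: "B0 H \<in> H" "B0 H \<notin> U H" and Bmin: "\<And>x. x \<in> H \<Longrightarrow> x < B0 H \<Longrightarrow> x \<in> U H"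
    if H: "H \<in> \<I>" for H
  proof -
    have "Max H \<notin> U H"
    proof
      assume "Max H \<in> U H"
      then obtain p J where "p\<in>{1..q}" "J\<in>\<I>" "A p J \<in> H" "Max H < A p J" by (auto simp: memU)
      moreover have "A p J \<le> Max H" using finH[OF H] calculation by simp
      ultimately show False by simp
    qed
    moreover have "Max H \<in> H" using finH[OF H] neH[OF H] by simp
    ultimately have ne: "H - U H \<noteq> {}" by blast
    have fin: "finite (H - U H)" using finH[OF H] by simp
    have "B0 H \<in> H - U H" unfolding B0_def using H Min_in[OF fin ne] by simp
    then show "B0 H \<in> H" "B0 H \<notin> U H" by auto
    show "x \<in> U H" if "x \<in> H" "x < B0 H" for x
    proof (rule ccontr)
      assume "x \<notin> U H"
      then have "B0 H \<le> x" unfolding B0_def using H Min_le[OF fin] that by simp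
      then show False using that by simp
    qed
  qed
  have oB: "orientation \<I> B0"
    unfolding orientation_def using Bin by (auto simp: B0_def)
  have cB: "cnd \<I> B0 B0"
    unfolding cnd_def
  proof (intro ballI impI, rule ccontr)
    fix I J assume I: "I\<in>\<I>" and J: "J\<in>\<I>" and a: "B0 J \<in> I" "B0 I \<in> J" "\<not> B0 J \<le> B0 I"
    then have "B0 I \<in> U J" using Bmin[OF J] by simp
    then obtain p K where K: "p\<in>{1..q}" "K\<in>\<I>" "A p K \<in> J" "Min K \<le> B0 I" "B0 I < A p K"
      by (auto simp: memU)
    show False
    proof (cases "A p K \<le> B0 J")
      case True
      then have "A p K \<in> I" using conv[OF I Bin(1)[OF I] a(1)] K by simp
      then have "B0 I \<in> U I" using K by (auto simp: memU)
      then show False using Bin(2)[OF I] by simp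
    next
      case False
      have "\<exists>p\<in>{1..q}. \<exists>K\<in>\<I>. A p K \<in> J \<and> Min K \<le> B0 J \<and> B0 J < A p K"
        using K a False by (intro bexI[OF _ K(1)] bexI[OF _ K(2)]) auto
      then have "B0 J \<in> U J" by (simp add: memU)
      then show False using Bin(2)[OF J] by simp
    qed
  qed
  have aB: "acyclic_orientation \<I> B0" using acyc_of_cnd[OF oB cB] .
  have ub: "cnd \<I> (A p) B0" if p: "p\<in>{1..q}" for p
    unfolding cnd_def
  proof (intro ballI impI, rule ccontr)
    fix I J assume I: "I\<in>\<I>" and J: "J\<in>\<I>" and a: "A p J \<in> I" "B0 I \<in> J" "\<not> A p J \<le> B0 I"
    have "\<exists>p\<in>{1..q}. \<exists>K\<in>\<I>. A p K \<in> I \<and> Min K \<le> B0 I \<and> B0 I < A p K"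
      using MinJ[OF J a(2)] a by (intro bexI[OF _ p] bexI[OF _ J]) auto
    then have "B0 I \<in> U I" by (simp add: memU)
    then show False using Bin(2)[OF I] by simp
  qed
  have least: "cnd \<I> B0 C" if oC: "orientation \<I> C" and cA: "\<forall>p\<in>{1..q}. cnd \<I> (A p) C" for C
    unfolding cnd_def
  proof (intro ballI impI, rule ccontr)
    fix I J assume I: "I\<in>\<I>" and J: "J\<in>\<I>" and a: "B0 J \<in> I" "C I \<in> J" "\<not> B0 J \<le> C I"
    then have "C I \<in> U J" using Bmin[OF J] by simp
    then obtain p K where K: "p\<in>{1..q}" "K\<in>\<I>" "A p K \<in> J" "Min K \<le> C I" "C I < A p K"
      by (auto simp: memU)
    have CIK: "C I \<in> K" using conv[OF K(2) MinJin[OF K(2)] ori_in[OF oA[OF K(1)] K(2)]] K by simp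
    show False
    proof (cases "A p K \<le> B0 J")
      case True
      then have "A p K \<in> I" using conv[OF I ori_in[OF oC I] a(1)] K by simp
      then have "A p K \<le> C I" using cndD[OF cA[rule_format, OF K(1)] I K(2)] CIK by simp
      then show False using K by simp
    next
      case False
      have "\<exists>p\<in>{1..q}. \<exists>K\<in>\<I>. A p K \<in> J \<and> Min K \<le> B0 J \<and> B0 J < A p K"
        using K a False by (intro bexI[OF _ K(1)] bexI[OF _ K(2)]) auto
      then have "B0 J \<in> U J" by (simp add: memU)
      then show False using Bin(2)[OF J] by simp
    qed
  qed
  have j: "is_join n \<I> (A ` {1..q}) B0"
    unfolding is_join_def
  proof (intro conjI ballI impI)
    show "B0 \<in> acyc_orients \<I>" using aB by (simp add: acyc_orients_def)
  next
    fix X assume "X \<in> A ` {1..q}"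
    then obtain p where "p\<in>{1..q}" "X = A p" by auto
    then show "P_le n \<I> X B0" using P_le_iff aA aB ub by auto
  next
    fix C assume C: "C \<in> acyc_orients \<I>" and h: "\<forall>X\<in>A ` {1..q}. P_le n \<I> X C"
    have aC: "acyclic_orientation \<I> C" using C by (simp add: acyc_orients_def)
    have "\<forall>p\<in>{1..q}. cnd \<I> (A p) C" using h P_le_iff by auto
    then have "cnd \<I> B0 C" using least acyc_ori[OF aC] by blast
    then show "P_le n \<I> B0 C" using P_le_iff aB aC by auto
  qed
  have "B = B0" if "is_join n \<I> (A ` {1..q}) B" for B
  proof -
    have aB': "acyclic_orientation \<I> B" using that by (simp add: is_join_def acyc_orients_def)
    have "P_le n \<I> B B0" using that j by (simp add: is_join_def)
    moreover have "P_le n \<I> B0 B" using that j by (simp add: is_join_def)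
    ultimately show ?thesis using cnd_antisym[OF acyc_ori[OF aB'] oB] P_le_iff by blast
  qed
  then show ?thesis using j by blast
qed

end

theorem proposition4p15:
  fixes n q :: nat and \<I> :: "nat set set" and A :: "nat \<Rightarrow> nat set \<Rightarrow> nat" and I :: "nat set"
  assumes "interval_hypergraph n \<I>"
    and "closed_under_intersection \<I>"
    and "\<forall>p\<in>{1..q}. acyclic_orientation \<I> (A p)"
    and "I \<in> \<I>"
  shows "(\<exists>B. is_join n \<I> (A ` {1..q}) B) \<and>
         (\<forall>B. is_join n \<I> (A ` {1..q}) B \<longrightarrow>
            B I = Min (I - (\<Union>p\<in>{1..q}. \<Union>J\<in>{J\<in>\<I>. A p J \<in> I}. {Min J..<A p J})))"
proof -
  interpret ctx n \<I> using assms(1,2) by unfold_locales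
  from join_main[OF assms(3)] show ?thesis using assms(4) by auto
qed

end
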